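(* Let $\mathsf{s} > \mathsf{r} \ge 1$ be integers. Let $\mathbf{Z}$ be a random $\mathsf{s}\times\mathsf{r}$ matrix over $\mathbb{F}_2$, uniformly distributed over the set of all $\mathsf{s}\times\mathsf{r}$ binary matrices of (column) rank $\mathsf{r}$, and let $\mathbf{U}$ be a random $\mathsf{r}\times\mathsf{s}$ matrix over $\mathbb{F}_2$, independent of $\mathbf{Z}$ and uniformly distributed over the set of all $\mathsf{r}\times\mathsf{s}$ binary matrices of (row) rank $\mathsf{r}$. Let $\mathbf{M}=\mathbf{Z}\mathbf{U}$ (the mask). Fix a set $I$ of $\mathsf{r}$ row indices and a set $J$ of $\mathsf{r}$ column indices of $\mathbf{M}$, and let $\mathbf{M}_{I,J}$ denote the $\mathsf{r}\times\mathsf{r}$ submatrix of $\mathbf{M}$ at the intersections of these rows and columns. Then, conditioned on $\mathbf{M}_{I,J}$ being invertible (i.e., its rows and its columns each spanning $\mathbb{F}_2^{\mathsf{r}}$), $\mathbf{M}_{I,J}$ is uniformly distributed over the set of all invertible $\mathsf{r}\times\mathsf{r}$ binary matrices.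
   Context: All arithmetic is over the binary field $\mathbb{F}_2$. The matrix $\mathbf{M}=\mathbf{Z}\mathbf{U}$ is called a masking matrix. *)

theory Defs
  imports "Jordan_Normal_Form.DL_Rank_Submatrix" "HOL-Library.Z2"
    "HOL-Probability.Probability_Mass_Function"
begin

text \<open>Column rank of an n-row matrix is \<open>vec_space.rank n\<close>; row rank of a matrix is
  the column rank of its transpose.\<close>

definition full_col_rank_mats :: "nat \<Rightarrow> nat \<Rightarrow> bit mat set" where
  "full_col_rank_mats s r = {Z \<in> carrier_mat s r. vec_space.rank s Z = r}"

definition full_row_rank_mats :: "nat \<Rightarrow> nat \<Rightarrow> bit mat set" where
  "full_row_rank_mats r s = {U \<in> carrier_mat r s. vec_space.rank s (transpose_mat U) = r}"

definition invertible_mats :: "nat \<Rightarrow> bit mat set" where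
  "invertible_mats r = {A \<in> carrier_mat r r. invertible_mat A}"

text \<open>Joint law of (Z, U): independent, each uniform over its set, i.e. uniform on the product.\<close>
definition ZU_pmf :: "nat \<Rightarrow> nat \<Rightarrow> (bit mat \<times> bit mat) pmf" where
  "ZU_pmf s r = pmf_of_set (full_col_rank_mats s r \<times> full_row_rank_mats r s)"

end

theory Submission
  imports Defs
begin

lemma card_sub_I: "I \<subseteq> {..<s} \<Longrightarrow> card {i. i < s \<and> i \<in> I} = card I"
  by (metis (no_types, lifting) Collect_cong Collect_mem_eq lessThan_iff subset_iff)

lemma card_sub_UNIV: "card {j. j < (m::nat) \<and> j \<in> UNIV} = m"
  by simp

lemma submatrix_mult:
  assumes Z: "Z \<in> carrier_mat n m" and U: "U \<in> carrier_mat m k"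
  shows "submatrix (Z * U) I J = submatrix Z I UNIV * submatrix U UNIV J"
proof (rule eq_matI)
  show "dim_row (submatrix (Z * U) I J) = dim_row (submatrix Z I UNIV * submatrix U UNIV J)"
    using Z U by (simp add: dim_submatrix)
  show "dim_col (submatrix (Z * U) I J) = dim_col (submatrix Z I UNIV * submatrix U UNIV J)"
    using Z U by (simp add: dim_submatrix)
  fix i j assume i: "i < dim_row (submatrix Z I UNIV * submatrix U UNIV J)"
    and j: "j < dim_col (submatrix Z I UNIV * submatrix U UNIV J)"
  have i': "i < card {i. i < n \<and> i \<in> I}" using i Z by (simp add: dim_submatrix)
  have j': "j < card {j. j < k \<and> j \<in> J}" using j U by (simp add: dim_submatrix)
  have pi: "pick I i < n" using pick_le[of i n I] i' by (metis (no_types, lifting) Collect_cong)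
  have pj: "pick J j < k" using pick_le[of j k J] j' by (metis (no_types, lifting) Collect_cong)
  have "submatrix (Z * U) I J $$ (i, j) = (Z * U) $$ (pick I i, pick J j)"
    using submatrix_index[of i "Z*U" I j J] i' j' Z U by simp
  also have "\<dots> = (\<Sum>l<m. Z $$ (pick I i, l) * U $$ (l, pick J j))"
    using pi pj Z U by (simp add: scalar_prod_def lessThan_atLeast0)
  also have "\<dots> = (submatrix Z I UNIV * submatrix U UNIV J) $$ (i, j)"
    using i' j' Z U by (simp add: dim_submatrix submatrix_index scalar_prod_def lessThan_atLeast0 pick_UNIV)
  finally show "submatrix (Z * U) I J $$ (i, j) = (submatrix Z I UNIV * submatrix U UNIV J) $$ (i, j)" .
qed

lemma submatrix_UNIV: "submatrix A UNIV UNIV = A"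
  unfolding submatrix_def pick_UNIV by (rule eq_matI) simp_all

lemma inv_det: assumes "A \<in> carrier_mat n n"
  shows "invertible_mat (A :: 'a :: field mat) \<longleftrightarrow> Determinant.det A \<noteq> 0"
proof
  assume "invertible_mat A"
  then obtain B where AB: "A * B = 1\<^sub>m n" and BA: "B * A = 1\<^sub>m (dim_row B)"
    using assms unfolding invertible_mat_def inverts_mat_def by auto
  have "dim_col B = n" using arg_cong[OF AB, of dim_col] by simp
  moreover have "dim_row B = n" using arg_cong[OF BA, of dim_col] assms by simp
  ultimately have "B \<in> carrier_mat n n" by auto
  then show "Determinant.det A \<noteq> 0" using Determinant.det_mult[OF assms, of B] AB by auto
next
  assume "Determinant.det A \<noteq> 0"
  from det_non_zero_imp_unit[OF assms this, of "()"]
  obtain B where "B \<in> carrier_mat n n" "A * B = 1\<^sub>m n" "B * A = 1\<^sub>m n"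
    unfolding Units_def ring_mat_def by auto
  then show "invertible_mat A" using assms
    unfolding invertible_mat_def inverts_mat_def square_mat.simps by auto
qed

lemma inv_obtain: assumes "A \<in> carrier_mat n n" "invertible_mat (A :: 'a :: field mat)"
  obtains B where "B \<in> carrier_mat n n" "A * B = 1\<^sub>m n" "B * A = 1\<^sub>m n"
proof -
  from assms have "Determinant.det A \<noteq> 0" using inv_det by blast
  from det_non_zero_imp_unit[OF assms(1) this, of "()"]
  show ?thesis using that unfolding Units_def ring_mat_def by auto
qed

lemma mult_unit_col: assumes "(A :: 'a :: field mat) \<in> carrier_mat n nc" "i < nc"
  shows "A *\<^sub>v unit_vec nc i = col A i"
  by (rule eq_vecI) (use assms in auto)

lemma (in vec_space) rank_le_card_cols:
  assumes "A \<in> carrier_mat n nc"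
  shows "rank A \<le> card (set (cols A))"
proof -
  obtain S where S: "maximal S (\<lambda>T. T \<subseteq> set (cols A) \<and> lin_indpt T)"
    using maximal_exists[of "(\<lambda>T. T \<subseteq> set (cols A) \<and> lin_indpt T)" "card (set (cols A))" "{}"]
    by (meson List.finite_set card_mono empty_iff empty_subsetI finite_lin_indpt2 rev_finite_subset)
  then have "card S \<le> card (set (cols A))" by (simp add: card_mono maximal_def)
  then show ?thesis using rank_card_indpt[OF assms S] by simp
qed

lemma (in vec_space) rank_kernel:
  assumes A: "A \<in> carrier_mat n nc"
  shows "rank A = nc \<longleftrightarrow> (\<forall>v\<in>carrier_vec nc. A *\<^sub>v v = 0\<^sub>v n \<longrightarrow> v = 0\<^sub>v nc)"
proof
  assume r: "rank A = nc"
  have d: "distinct (cols A)"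
  proof (rule ccontr)
    assume "\<not> distinct (cols A)"
    then have "card (set (cols A)) < nc"
      using A card_distinct[of "cols A"] card_length[of "cols A"] by fastforce
    then show False using rank_le_card_cols[OF A] r by simp
  qed
  have li: "lin_indpt (set (cols A))" using full_rank_lin_indpt[OF A r d] .
  show "\<forall>v\<in>carrier_vec nc. A *\<^sub>v v = 0\<^sub>v n \<longrightarrow> v = 0\<^sub>v nc"
  proof (intro ballI impI)
    fix v assume v: "v \<in> carrier_vec nc" "A *\<^sub>v v = 0\<^sub>v n"
    show "v = 0\<^sub>v nc"
    proof (rule ccontr)
      assume "v \<noteq> 0\<^sub>v nc"
      from lin_depI[OF A v(1) this v(2) d] li show False by simp
    qed
  qed
next
  assume K: "\<forall>v\<in>carrier_vec nc. A *\<^sub>v v = 0\<^sub>v n \<longrightarrow> v = 0\<^sub>v nc"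
  have d: "distinct (cols A)"
  proof (rule ccontr)
    assume "\<not> distinct (cols A)"
    then obtain i j where ij: "i < nc" "j < nc" "i \<noteq> j" "cols A ! i = cols A ! j"
      using A by (auto simp: distinct_conv_nth)
    then have cij: "col A i = col A j" using A by simp
    define v :: "'a Matrix.vec" where "v = unit_vec nc i - unit_vec nc j"
    have vc: "v \<in> carrier_vec nc" unfolding v_def by simp
    have "A *\<^sub>v v = A *\<^sub>v unit_vec nc i - A *\<^sub>v unit_vec nc j"
      unfolding v_def using A by (simp add: mult_minus_distrib_mat_vec)
    also have "\<dots> = 0\<^sub>v n" using mult_unit_col[OF A ij(1)] mult_unit_col[OF A ij(2)] cij A col_dim[of A j]
      by simp
    finally have "v = 0\<^sub>v nc" using K vc by blast
    moreover have "v $ i = 1" unfolding v_def using ij by simp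
    ultimately show False using ij by simp
  qed
  have "lin_indpt (set (cols A))"
  proof (rule ccontr)
    assume "\<not> lin_indpt (set (cols A))"
    then obtain v where "v \<in> carrier_vec nc" "v \<noteq> 0\<^sub>v nc" "A *\<^sub>v v = 0\<^sub>v n"
      using lin_depE[OF A _ d] by blast
    then show False using K by blast
  qed
  then show "rank A = nc" using lin_indpt_full_rank[OF A d] by simp
qed

lemma rank_mult_inv:
  assumes A: "(A :: 'a :: field mat) \<in> carrier_mat n m" and B: "B \<in> carrier_mat m m"
    and B': "B' \<in> carrier_mat m m" and BB: "B' * B = 1\<^sub>m m"
    and r: "vec_space.rank n A = m"
  shows "vec_space.rank n (A * B) = m"
proof -
  have AB: "A * B \<in> carrier_mat n m" using A B by simp
  have K: "\<forall>v\<in>carrier_vec m. A *\<^sub>v v = 0\<^sub>v n \<longrightarrow> v = 0\<^sub>v m"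
    using vec_space.rank_kernel[OF A] r by blast
  show ?thesis unfolding vec_space.rank_kernel[OF AB]
  proof (intro ballI impI)
    fix v :: "'a Matrix.vec" assume v: "v \<in> carrier_vec m" "(A * B) *\<^sub>v v = 0\<^sub>v n"
    have "A *\<^sub>v (B *\<^sub>v v) = 0\<^sub>v n" using v A B assoc_mult_mat_vec[OF A B v(1)] by simp
    then have "B *\<^sub>v v = 0\<^sub>v m" using K B v by simp
    moreover have "B' *\<^sub>v 0\<^sub>v m = 0\<^sub>v m" by (rule eq_vecI) (use B' in auto)
    ultimately have "B' *\<^sub>v (B *\<^sub>v v) = 0\<^sub>v m" by simp
    then show "v = 0\<^sub>v m" using BB B B' v assoc_mult_mat_vec[OF B' B v(1)] by simp
  qed
qed

lemma finite_bit_UNIV: "finite (UNIV :: bit set)"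
proof -
  have "(UNIV :: bit set) = {0, 1}" using bit_not_zero_iff by blast
  then show ?thesis by (metis finite.emptyI finite_insert)
qed

lemma finite_carrier_bit: "finite (carrier_mat n m :: bit mat set)"
proof -
  have "carrier_mat n m \<subseteq> (\<lambda>f. Matrix.mat n m f) ` ({..<n} \<times> {..<m} \<rightarrow>\<^sub>E (UNIV :: bit set))"
  proof
    fix A :: "bit mat" assume A: "A \<in> carrier_mat n m"
    let ?f = "restrict (\<lambda>ij. A $$ ij) ({..<n} \<times> {..<m})"
    have "A = Matrix.mat n m ?f" by (rule eq_matI) (use A in auto)
    moreover have "?f \<in> {..<n} \<times> {..<m} \<rightarrow>\<^sub>E UNIV" by simp
    ultimately show "A \<in> (\<lambda>f. Matrix.mat n m f) ` ({..<n} \<times> {..<m} \<rightarrow>\<^sub>E (UNIV :: bit set))" by blast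
  qed
  moreover have "finite ({..<n} \<times> {..<m} \<rightarrow>\<^sub>E (UNIV :: bit set))"
    by (rule finite_PiE) (auto simp: finite_bit_UNIV)
  ultimately show ?thesis using finite_subset by blast
qed

lemma finite_Zs: "finite (full_col_rank_mats s r)"
  unfolding full_col_rank_mats_def by (rule finite_subset[OF _ finite_carrier_bit[of s r]]) auto

lemma finite_Us: "finite (full_row_rank_mats r s)"
  unfolding full_row_rank_mats_def by (rule finite_subset[OF _ finite_carrier_bit[of r s]]) auto

lemma finite_invs: "finite (invertible_mats r)"
  unfolding invertible_mats_def by (rule finite_subset[OF _ finite_carrier_bit[of r r]]) auto

lemma ZI_carrier: assumes "Z \<in> carrier_mat s r" "I \<subseteq> {..<s}" "card I = r"
  shows "submatrix Z I UNIV \<in> carrier_mat r r"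
  using assms card_sub_I[OF assms(2)] by (auto simp: dim_submatrix)

lemma UJ_carrier: assumes "U \<in> carrier_mat r s" "J \<subseteq> {..<s}" "card J = r"
  shows "submatrix U UNIV J \<in> carrier_mat r r"
  using assms card_sub_I[OF assms(2)] by (auto simp: dim_submatrix)

lemma K_le:
  assumes I: "I \<subseteq> {..<s}" "card I = r"
    and X: "X \<in> carrier_mat r r" "invertible_mat X"
    and Y: "Y \<in> carrier_mat r r" "invertible_mat Y"
  shows "card {Z \<in> full_col_rank_mats s r. submatrix Z I UNIV = X}
       \<le> card {Z \<in> full_col_rank_mats s r. submatrix Z I UNIV = Y}"
proof -
  obtain X' where X': "X' \<in> carrier_mat r r" "X * X' = 1\<^sub>m r" "X' * X = 1\<^sub>m r"
    using inv_obtain[OF X] by blast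
  obtain Y' where Y': "Y' \<in> carrier_mat r r" "Y * Y' = 1\<^sub>m r" "Y' * Y = 1\<^sub>m r"
    using inv_obtain[OF Y] by blast
  define G where "G = X' * Y"
  define G' where "G' = Y' * X"
  have G: "G \<in> carrier_mat r r" unfolding G_def using X' Y by simp
  have G': "G' \<in> carrier_mat r r" unfolding G'_def using Y' X by simp
  have "G' * G = Y' * (X * (X' * Y))" unfolding G_def G'_def
    using assoc_mult_mat[OF Y'(1) X(1), of "X' * Y" r] X' Y by simp
  also have "X * (X' * Y) = Y" using assoc_mult_mat[OF X(1) X'(1) Y(1), symmetric] X' Y by simp
  finally have G'G: "G' * G = 1\<^sub>m r" using Y' by simp
  have "G * G' = X' * (Y * (Y' * X))" unfolding G_def G'_def
    using assoc_mult_mat[OF X'(1) Y(1), of "Y' * X" r] Y' X by simp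
  also have "Y * (Y' * X) = X" using assoc_mult_mat[OF Y(1) Y'(1) X(1), symmetric] Y' X by simp
  finally have GG': "G * G' = 1\<^sub>m r" using X' by simp
  show ?thesis
  proof (rule card_inj_on_le[where f = "\<lambda>Z. Z * G"])
    show "finite {Z \<in> full_col_rank_mats s r. submatrix Z I UNIV = Y}"
      using finite_Zs by simp
    show "inj_on (\<lambda>Z. Z * G) {Z \<in> full_col_rank_mats s r. submatrix Z I UNIV = X}"
    proof (rule inj_onI)
      fix Z1 Z2 assume Z1: "Z1 \<in> {Z \<in> full_col_rank_mats s r. submatrix Z I UNIV = X}"
        and Z2: "Z2 \<in> {Z \<in> full_col_rank_mats s r. submatrix Z I UNIV = X}"
        and eq: "Z1 * G = Z2 * G"
      have c1: "Z1 \<in> carrier_mat s r" and c2: "Z2 \<in> carrier_mat s r"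
        using Z1 Z2 unfolding full_col_rank_mats_def by auto
      have "Z1 = Z1 * G * G'" using assoc_mult_mat[OF c1 G G'] GG' c1 by simp
      also have "\<dots> = Z2 * G * G'" using eq by simp
      also have "\<dots> = Z2" using assoc_mult_mat[OF c2 G G'] GG' c2 by simp
      finally show "Z1 = Z2" .
    qed
    show "(\<lambda>Z. Z * G) ` {Z \<in> full_col_rank_mats s r. submatrix Z I UNIV = X}
        \<subseteq> {Z \<in> full_col_rank_mats s r. submatrix Z I UNIV = Y}"
    proof (rule image_subsetI)
      fix Z assume "Z \<in> {Z \<in> full_col_rank_mats s r. submatrix Z I UNIV = X}"
      then have Z: "Z \<in> full_col_rank_mats s r" "submatrix Z I UNIV = X" by auto
      have c: "Z \<in> carrier_mat s r" and rk: "vec_space.rank s Z = r"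
        using Z unfolding full_col_rank_mats_def by auto
      have "vec_space.rank s (Z * G) = r" using rank_mult_inv[OF c G G' G'G rk] .
      then have "Z * G \<in> full_col_rank_mats s r"
        unfolding full_col_rank_mats_def using c G by simp
      moreover have "submatrix (Z * G) I UNIV = Y"
      proof -
        have "submatrix (Z * G) I UNIV = submatrix Z I UNIV * submatrix G UNIV UNIV"
          by (rule submatrix_mult[OF c G])
        also have "\<dots> = X * G" using Z(2) by (simp only: submatrix_UNIV)
        also have "\<dots> = Y" unfolding G_def
          using assoc_mult_mat[OF X(1) X'(1) Y(1), symmetric] X' Y by simp
        finally show ?thesis .
      qed
      ultimately show "Z * G \<in> {Z \<in> full_col_rank_mats s r. submatrix Z I UNIV = Y}" by simp
    qed
  qed
qed

lemma K_eq:
  assumes I: "I \<subseteq> {..<s}" "card I = r"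
    and X: "X \<in> carrier_mat r r" "invertible_mat X"
    and Y: "Y \<in> carrier_mat r r" "invertible_mat Y"
  shows "card {Z \<in> full_col_rank_mats s r. submatrix Z I UNIV = X}
       = card {Z \<in> full_col_rank_mats s r. submatrix Z I UNIV = Y}"
  using K_le[OF I X Y] K_le[OF I Y X] by simp

lemma det_ne0_mult: assumes "A \<in> carrier_mat n n" "B \<in> carrier_mat n n"
  shows "Determinant.det (A * B) \<noteq> (0 :: 'a :: field) \<longleftrightarrow> Determinant.det A \<noteq> 0 \<and> Determinant.det B \<noteq> 0"
  using Determinant.det_mult[OF assms] by simp

lemma one_invertible: "invertible_mat (1\<^sub>m n :: 'a :: field mat)"
  using inv_det[of "1\<^sub>m n" n] by simp

lemma fiber:
  assumes I: "I \<subseteq> {..<s}" "card I = r" and J: "J \<subseteq> {..<s}" "card J = r"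
    and U: "U \<in> carrier_mat r s" and A: "A \<in> carrier_mat r r" "invertible_mat A"
  shows "card {Z \<in> full_col_rank_mats s r. submatrix (Z * U) I J = A \<and> invertible_mat (submatrix (Z * U) I J)}
    = (if invertible_mat (submatrix U UNIV J)
       then card {Z \<in> full_col_rank_mats s r. submatrix Z I UNIV = 1\<^sub>m r} else 0)"
proof -
  have UJ: "submatrix U UNIV J \<in> carrier_mat r r" using UJ_carrier[OF U J] .
  have eqZ: "submatrix (Z * U) I J = submatrix Z I UNIV * submatrix U UNIV J"
    if "Z \<in> full_col_rank_mats s r" for Z
    using that submatrix_mult[OF _ U] unfolding full_col_rank_mats_def by blast
  have ZI: "submatrix Z I UNIV \<in> carrier_mat r r" if "Z \<in> full_col_rank_mats s r" for Z
    using that ZI_carrier[OF _ I] unfolding full_col_rank_mats_def by blast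
  show ?thesis
  proof (cases "invertible_mat (submatrix U UNIV J)")
    case False
    have e0: "{Z \<in> full_col_rank_mats s r. submatrix (Z * U) I J = A \<and> invertible_mat (submatrix (Z * U) I J)} = {}"
    proof (rule equals0I)
      fix Z assume "Z \<in> {Z \<in> full_col_rank_mats s r. submatrix (Z * U) I J = A \<and> invertible_mat (submatrix (Z * U) I J)}"
      then have Z: "Z \<in> full_col_rank_mats s r" and inv: "invertible_mat (submatrix Z I UNIV * submatrix U UNIV J)"
        using eqZ by auto
      have "Determinant.det (submatrix Z I UNIV * submatrix U UNIV J) \<noteq> 0"
        using inv inv_det[of _ r] ZI[OF Z] UJ by (metis mult_carrier_mat)
      then have "Determinant.det (submatrix U UNIV J) \<noteq> 0" using det_ne0_mult[OF ZI[OF Z] UJ] by simp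
      then show False using False inv_det[OF UJ] by simp
    qed
    show ?thesis unfolding e0 using False by simp
  next
    case True
    obtain W where W: "W \<in> carrier_mat r r" "submatrix U UNIV J * W = 1\<^sub>m r" "W * submatrix U UNIV J = 1\<^sub>m r"
      using inv_obtain[OF UJ True] by blast
    have AW: "A * W \<in> carrier_mat r r" using A W by simp
    have "Determinant.det W \<noteq> 0" using det_ne0_mult[OF UJ W(1)] W(2) by simp
    moreover have "Determinant.det A \<noteq> 0" using A inv_det by blast
    ultimately have "Determinant.det (A * W) \<noteq> 0" using det_ne0_mult[OF A(1) W(1)] by simp
    then have AWi: "invertible_mat (A * W)" using inv_det[OF AW] by simp
    have "{Z \<in> full_col_rank_mats s r. submatrix (Z * U) I J = A \<and> invertible_mat (submatrix (Z * U) I J)}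
       = {Z \<in> full_col_rank_mats s r. submatrix Z I UNIV = A * W}"
    proof (rule Collect_cong, rule iffI)
      fix Z assume H: "Z \<in> full_col_rank_mats s r \<and> submatrix (Z * U) I J = A \<and> invertible_mat (submatrix (Z * U) I J)"
      then have Z: "Z \<in> full_col_rank_mats s r" and e: "submatrix Z I UNIV * submatrix U UNIV J = A"
        using eqZ by auto
      have "submatrix Z I UNIV = submatrix Z I UNIV * (submatrix U UNIV J * W)"
        using W(2) ZI[OF Z] by simp
      also have "\<dots> = A * W" using assoc_mult_mat[OF ZI[OF Z] UJ W(1), symmetric] e by simp
      finally show "Z \<in> full_col_rank_mats s r \<and> submatrix Z I UNIV = A * W" using Z by simp
    next
      fix Z assume H: "Z \<in> full_col_rank_mats s r \<and> submatrix Z I UNIV = A * W"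
      then have Z: "Z \<in> full_col_rank_mats s r" and e: "submatrix Z I UNIV = A * W" by auto
      have "submatrix (Z * U) I J = A * W * submatrix U UNIV J" using eqZ[OF Z] e by simp
      also have "\<dots> = A * (W * submatrix U UNIV J)" using assoc_mult_mat[OF A(1) W(1) UJ] .
      also have "\<dots> = A" using W(3) A by simp
      finally show "Z \<in> full_col_rank_mats s r \<and> submatrix (Z * U) I J = A \<and> invertible_mat (submatrix (Z * U) I J)"
        using Z A by simp
    qed
    moreover have "card {Z \<in> full_col_rank_mats s r. submatrix Z I UNIV = A * W}
       = card {Z \<in> full_col_rank_mats s r. submatrix Z I UNIV = 1\<^sub>m r}"
      using K_eq[OF I AW AWi one_carrier_mat one_invertible] .
    ultimately show ?thesis using True by simp
  qed
qed

lemma card_prod_filter: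
  assumes "finite X" "finite Y"
  shows "card ((X \<times> Y) \<inter> {(x, y). P x y}) = (\<Sum>y\<in>Y. card {x \<in> X. P x y})"
proof -
  have "(X \<times> Y) \<inter> {(x, y). P x y} = (\<lambda>(y, x). (x, y)) ` (SIGMA y:Y. {x \<in> X. P x y})"
    by auto
  moreover have "inj_on (\<lambda>(y, x). (x, y)) (SIGMA y:Y. {x \<in> X. P x y})"
    by (auto simp: inj_on_def)
  ultimately have "card ((X \<times> Y) \<inter> {(x, y). P x y}) = card (SIGMA y:Y. {x \<in> X. P x y})"
    by (simp add: card_image)
  also have "\<dots> = (\<Sum>y\<in>Y. card {x \<in> X. P x y})" using assms by simp
  finally show ?thesis .
qed

definition E0 :: "nat \<Rightarrow> nat \<Rightarrow> nat set \<Rightarrow> bit mat" where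
  "E0 s r X = Matrix.mat s r (\<lambda>(i, j). if i = pick X j then 1 else 0)"

lemma pick_inj: assumes "i < card X" "j < card X" "pick X i = pick X j"
  shows "i = j"
proof (rule ccontr)
  assume "i \<noteq> j"
  then have "i < j \<or> j < i" by arith
  then show False
  proof
    assume "i < j" then have "pick X i < pick X j" using pick_mono[of j X i] assms by simp
    then show False using assms by simp
  next
    assume "j < i" then have "pick X j < pick X i" using pick_mono[of i X j] assms by simp
    then show False using assms by simp
  qed
qed

lemma E0_sub: assumes X: "X \<subseteq> {..<s}" "card X = r"
  shows "submatrix (E0 s r X) X UNIV = 1\<^sub>m r"
proof (rule eq_matI)
  have cX: "card {i. i < s \<and> i \<in> X} = r" using card_sub_I[OF X(1)] X(2) by simp
  show "dim_row (submatrix (E0 s r X) X UNIV) = dim_row (1\<^sub>m r :: bit mat)"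
    using cX by (simp add: dim_submatrix E0_def)
  show "dim_col (submatrix (E0 s r X) X UNIV) = dim_col (1\<^sub>m r :: bit mat)"
    by (simp add: dim_submatrix E0_def)
  fix i j assume i: "i < dim_row (1\<^sub>m r :: bit mat)" and j: "j < dim_col (1\<^sub>m r :: bit mat)"
  have ir: "i < r" and jr: "j < r" using i j by auto
  have pi: "pick X i < s" using pick_in_set[of i X] ir X by auto
  have pj: "pick X j < s" using pick_in_set[of j X] jr X by auto
  have "submatrix (E0 s r X) X UNIV $$ (i, j) = E0 s r X $$ (pick X i, pick UNIV j)"
    by (rule submatrix_index) (use cX ir jr in \<open>simp_all add: E0_def\<close>)
  also have "\<dots> = (if i = j then 1 else 0)"
    using pi jr pick_inj[of i X j] ir X(2) by (auto simp: E0_def pick_UNIV)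
  finally show "submatrix (E0 s r X) X UNIV $$ (i, j) = (1\<^sub>m r :: bit mat) $$ (i, j)"
    using ir jr by simp
qed

lemma E0_rank: assumes X: "X \<subseteq> {..<s}" "card X = r"
  shows "E0 s r X \<in> full_col_rank_mats s r"
proof -
  have c: "E0 s r X \<in> carrier_mat s r" by (simp add: E0_def)
  have "Determinant.det (submatrix (E0 s r X) X UNIV) \<noteq> 0" using E0_sub[OF X] by simp
  from vec_space.rank_gt_minor[OF c this] have "r \<le> vec_space.rank s (E0 s r X)" by simp
  moreover have "vec_space.rank s (E0 s r X) \<le> r" using vec_space.rank_le_nc[OF c] .
  ultimately show ?thesis unfolding full_col_rank_mats_def using c by simp
qed

lemma submatrix_transpose: "submatrix (transpose_mat A) I J = transpose_mat (submatrix A J I)"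
  unfolding submatrix_def by (rule eq_matI) (auto simp: pick_le)

lemma U0_props: assumes J: "J \<subseteq> {..<s}" "card J = r"
  shows "transpose_mat (E0 s r J) \<in> full_row_rank_mats r s"
    "submatrix (transpose_mat (E0 s r J)) UNIV J = 1\<^sub>m r"
proof -
  show "transpose_mat (E0 s r J) \<in> full_row_rank_mats r s"
    using E0_rank[OF J] unfolding full_row_rank_mats_def full_col_rank_mats_def by auto
  show "submatrix (transpose_mat (E0 s r J)) UNIV J = 1\<^sub>m r"
    unfolding submatrix_transpose E0_sub[OF J] by simp
qed

theorem theorem2:
  fixes s r :: nat and I J :: "nat set"
  assumes "1 \<le> r" and "r < s"
    and "I \<subseteq> {..<s}" and "card I = r"
    and "J \<subseteq> {..<s}" and "card J = r"
  shows "measure_pmf.prob (ZU_pmf s r)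
           {(Z, U). invertible_mat (submatrix (Z * U) I J)} > 0
       \<and> (\<forall>A \<in> invertible_mats r.
           measure_pmf.prob (ZU_pmf s r)
             {(Z, U). submatrix (Z * U) I J = A \<and> invertible_mat (submatrix (Z * U) I J)}
           / measure_pmf.prob (ZU_pmf s r)
             {(Z, U). invertible_mat (submatrix (Z * U) I J)}
           = 1 / real (card (invertible_mats r)))"
proof -
  note I = assms(3,4) and J = assms(5,6)
  define Zs where "Zs = full_col_rank_mats s r"
  define Us where "Us = full_row_rank_mats r s"
  define S where "S = Zs \<times> Us"
  define N where "N = card (invertible_mats r)"
  define EA :: "bit mat \<Rightarrow> (bit mat \<times> bit mat) set" where "EA = (\<lambda>A. {(Z, U). submatrix (Z * U) I J = A \<and> invertible_mat (submatrix (Z * U) I J)})"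
  define E :: "(bit mat \<times> bit mat) set" where "E = {(Z, U). invertible_mat (submatrix (Z * U) I J)}"
  define k where "k = card {Z \<in> Zs. submatrix Z I UNIV = 1\<^sub>m r}"
  define c where "c = (\<Sum>U\<in>Us. if invertible_mat (submatrix U UNIV J) then k else 0)"
  have fZ: "finite Zs" unfolding Zs_def by (rule finite_Zs)
  have fU: "finite Us" unfolding Us_def by (rule finite_Us)
  have fS: "finite S" unfolding S_def using fZ fU by simp
  have Z0: "E0 s r I \<in> Zs" unfolding Zs_def using E0_rank[OF I] .
  have U0: "transpose_mat (E0 s r J) \<in> Us" unfolding Us_def using U0_props(1)[OF J] .
  have S0: "S \<noteq> {}" unfolding S_def using Z0 U0 by blast
  have cA: "card (S \<inter> EA A) = c" if A: "A \<in> invertible_mats r" for A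
  proof -
    have Ac: "A \<in> carrier_mat r r" "invertible_mat A" using A unfolding invertible_mats_def by auto
    have "card (S \<inter> EA A) = (\<Sum>U\<in>Us. card {Z \<in> Zs. submatrix (Z * U) I J = A \<and> invertible_mat (submatrix (Z * U) I J)})"
      unfolding S_def EA_def
      using card_prod_filter[OF fZ fU, of "\<lambda>Z U. submatrix (Z * U) I J = A \<and> invertible_mat (submatrix (Z * U) I J)"]
      by simp
    also have "\<dots> = c" unfolding c_def k_def
    proof (rule sum.cong[OF refl])
      fix U assume "U \<in> Us"
      then have Uc: "U \<in> carrier_mat r s" unfolding Us_def full_row_rank_mats_def by auto
      show "card {Z \<in> Zs. submatrix (Z * U) I J = A \<and> invertible_mat (submatrix (Z * U) I J)} =
         (if invertible_mat (submatrix U UNIV J) then card {Z \<in> Zs. submatrix Z I UNIV = 1\<^sub>m r} else 0)"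
        unfolding Zs_def using fiber[OF I J Uc Ac] .
    qed
    finally show ?thesis .
  qed
  have carrM: "submatrix (Z * U) I J \<in> carrier_mat r r" if "(Z, U) \<in> S" for Z U
  proof -
    have "Z \<in> carrier_mat s r" "U \<in> carrier_mat r s" using that
      unfolding S_def Zs_def Us_def full_col_rank_mats_def full_row_rank_mats_def by auto
    then have "Z * U \<in> carrier_mat s s" by simp
    then have "dim_row (submatrix (Z * U) I J) = r" "dim_col (submatrix (Z * U) I J) = r"
      unfolding dim_submatrix using card_sub_I[OF I(1)] card_sub_I[OF J(1)] I(2) J(2) by auto
    then show ?thesis by (intro carrier_matI)
  qed
  have SE: "S \<inter> E = (\<Union>A\<in>invertible_mats r. S \<inter> EA A)"
  proof
    show "S \<inter> E \<subseteq> (\<Union>A\<in>invertible_mats r. S \<inter> EA A)"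
    proof
      fix x assume x: "x \<in> S \<inter> E"
      obtain Z U where xe: "x = (Z, U)" by (cases x)
      have "submatrix (Z * U) I J \<in> invertible_mats r"
        using x carrM[of Z U] unfolding xe E_def invertible_mats_def by auto
      moreover have "x \<in> S \<inter> EA (submatrix (Z * U) I J)"
        using x unfolding xe E_def EA_def by auto
      ultimately show "x \<in> (\<Union>A\<in>invertible_mats r. S \<inter> EA A)" by blast
    qed
    show "(\<Union>A\<in>invertible_mats r. S \<inter> EA A) \<subseteq> S \<inter> E"
      unfolding EA_def E_def by auto
  qed
  have cE: "card (S \<inter> E) = N * c"
  proof -
    have "card (S \<inter> E) = (\<Sum>A\<in>invertible_mats r. card (S \<inter> EA A))"
      unfolding SE
      by (rule card_UN_disjoint) (use finite_invs fS in \<open>auto simp: EA_def\<close>)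
    also have "\<dots> = (\<Sum>A\<in>invertible_mats r. c)" using cA by simp
    finally show ?thesis unfolding N_def by simp
  qed
  have kpos: "k > 0"
  proof -
    have "E0 s r I \<in> {Z \<in> Zs. submatrix Z I UNIV = 1\<^sub>m r}" using Z0 E0_sub[OF I] by simp
    moreover have "finite {Z \<in> Zs. submatrix Z I UNIV = 1\<^sub>m r}" using fZ by simp
    ultimately show ?thesis unfolding k_def by (metis card_gt_0_iff empty_iff)
  qed
  have cpos: "c > 0"
  proof -
    have "k = (if invertible_mat (submatrix (transpose_mat (E0 s r J)) UNIV J) then k else 0)"
      using U0_props(2)[OF J] one_invertible[where 'a = bit, of r] by simp
    also have "\<dots> \<le> c" unfolding c_def
      by (rule member_le_sum[OF U0]) (use fU in auto)
    finally show ?thesis using kpos by simp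
  qed
  have Npos: "N > 0"
  proof -
    have "1\<^sub>m r \<in> invertible_mats r" unfolding invertible_mats_def using one_invertible by simp
    then show ?thesis unfolding N_def using finite_invs by (metis card_gt_0_iff empty_iff)
  qed
  have pE: "measure_pmf.prob (ZU_pmf s r) E = N * c / card S"
    unfolding ZU_pmf_def measure_pmf_of_set[OF S0[unfolded S_def Zs_def Us_def] fS[unfolded S_def Zs_def Us_def]]
    using cE unfolding S_def Zs_def Us_def by simp
  have pEA: "measure_pmf.prob (ZU_pmf s r) (EA A) = c / card S" if "A \<in> invertible_mats r" for A
    unfolding ZU_pmf_def measure_pmf_of_set[OF S0[unfolded S_def Zs_def Us_def] fS[unfolded S_def Zs_def Us_def]]
    using cA[OF that] unfolding S_def Zs_def Us_def by simp
  have cS: "card S > 0" using fS S0 by (simp add: card_gt_0_iff)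
  show ?thesis
  proof
    show "measure_pmf.prob (ZU_pmf s r) {(Z, U). invertible_mat (submatrix (Z * U) I J)} > 0"
      using pE[unfolded E_def] Npos cpos cS by simp
    show "\<forall>A \<in> invertible_mats r.
           measure_pmf.prob (ZU_pmf s r)
             {(Z, U). submatrix (Z * U) I J = A \<and> invertible_mat (submatrix (Z * U) I J)}
           / measure_pmf.prob (ZU_pmf s r)
             {(Z, U). invertible_mat (submatrix (Z * U) I J)}
           = 1 / real (card (invertible_mats r))"
    proof
      fix A assume A: "A \<in> invertible_mats r"
      show "measure_pmf.prob (ZU_pmf s r)
             {(Z, U). submatrix (Z * U) I J = A \<and> invertible_mat (submatrix (Z * U) I J)}
           / measure_pmf.prob (ZU_pmf s r)
             {(Z, U). invertible_mat (submatrix (Z * U) I J)}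
           = 1 / real (card (invertible_mats r))"
      proof -
        have e1: "measure_pmf.prob (ZU_pmf s r)
             {(Z, U). submatrix (Z * U) I J = A \<and> invertible_mat (submatrix (Z * U) I J)} = c / card S"
          using pEA[OF A] unfolding EA_def by simp
        have e2: "measure_pmf.prob (ZU_pmf s r)
             {(Z, U). invertible_mat (submatrix (Z * U) I J)} = N * c / card S"
          using pE unfolding E_def by simp
        show ?thesis unfolding e1 e2 N_def[symmetric] using Npos cpos cS by (simp add: field_simps)
      qed
    qed
  qed
qed

end
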